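(* Let $\beta\in(0,2)$ and let $g:\mathbb{R}\to\mathbb{R}$ be measurable such that there exist $K>0$, $\kappa>-1/\beta$ and $\alpha>0$ with $\alpha\beta>2$ and $$|g(x)|\le K\big(x^\kappa\mathbf 1_{[0,1)}(x)+x^{-\alpha}\mathbf 1_{[1,\infty)}(x)\big)\quad\text{for all }x\in\mathbb{R}.$$ Fix $m\in\mathbb{N}$ and define, for $i\in\mathbb{Z}$, $$\rho_i=\int_{\mathbb{R}}|g(x)g(x+i)|^{\beta/2}\,\mathrm{d}x,\qquad \mu_i=\int_{-m}^{\infty}|g(x+i)|^\beta\,\mathrm{d}x.$$ Then there exists a constant $C>0$ such that for every $i\in\mathbb{N}$: (i) $\rho_i\le C\,i^{-\alpha\beta/2}$; (ii) if $i>m$, then $\mu_i\le C\,(i-m)^{1-\alpha\beta}$. *)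

theory Defs
  imports "HOL-Analysis.Analysis"
begin

end

theory Submission
  imports Defs
begin

lemma shift_int:
  fixes r a t :: real
  assumes "r < -1" "a > 0"
  shows "(\<integral>\<^sup>+ x. ennreal ((t + x) powr r) * indicator {a - t..} x \<partial>lborel)
         = ennreal (-(a powr (r+1)) / (r+1))"
proof -
  have h: "(\<integral>\<^sup>+ y. ennreal (y powr r) * indicator {a..} y \<partial>lborel) = ennreal (-(a powr (r+1)) / (r+1))"
    by (rule nn_integral_has_integral_lebesgue') (use has_integral_powr_to_inf[OF assms] in auto)
  have m: "(\<lambda>y. ennreal (y powr r) * indicator {a..} y) \<in> borel_measurable borel" by measurable
  have "(\<integral>\<^sup>+ y. ennreal (y powr r) * indicator {a..} y \<partial>lborel)
      = (\<integral>\<^sup>+ x. ennreal ((t + 1 * x) powr r) * indicator {a..} (t + 1 * x) \<partial>lborel)"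
    using nn_integral_real_affine[OF m, of 1 t] by simp
  also have "\<dots> = (\<integral>\<^sup>+ x. ennreal ((t + x) powr r) * indicator {a - t..} x \<partial>lborel)"
    by (intro nn_integral_cong) (auto simp: indicator_def)
  finally show ?thesis using h by simp
qed

theorem lemmaA1:
  fixes \<beta> K \<kappa> \<alpha> :: real and g :: "real \<Rightarrow> real" and m :: nat
  assumes "0 < \<beta>" "\<beta> < 2"
    and "g \<in> borel_measurable lborel"
    and "K > 0" "\<kappa> > - 1 / \<beta>" "\<alpha> > 0" "\<alpha> * \<beta> > 2"
    and "\<And>x. \<bar>g x\<bar> \<le> K * (x powr \<kappa> * indicator {0..<1} x + x powr (-\<alpha>) * indicator {1..} x)"
  shows "\<exists>C>0. \<forall>i::nat.
     (i \<ge> 1 \<longrightarrow>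
        (\<integral>\<^sup>+ x. ennreal (\<bar>g x * g (x + real i)\<bar> powr (\<beta> / 2)) \<partial>lborel)
          \<le> ennreal (C * real i powr (- \<alpha> * \<beta> / 2))) \<and>
     (i > m \<longrightarrow>
        (\<integral>\<^sup>+ x \<in> {- real m..}. ennreal (\<bar>g (x + real i)\<bar> powr \<beta>) \<partial>lborel)
          \<le> ennreal (C * (real i - real m) powr (1 - \<alpha> * \<beta>)))"
proof -
  note gb = assms(8)
  define p where "p = \<kappa> * \<beta> / 2"
  define q where "q = - \<alpha> * \<beta> / 2"
  define r where "r = - \<alpha> * \<beta>"
  define c where "c = K powr \<beta>"
  have c0: "c > 0" using assms by (simp add: c_def)
  have p1: "p > -1"
  proof -
    have "\<kappa> * \<beta> > -1" using assms(1,5) by (simp add: field_simps)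
    thus ?thesis unfolding p_def by simp
  qed
  have q1: "q < -1" using assms(7) unfolding q_def by simp
  have r1: "r < -1" using assms(7) unfolding r_def by simp
  define F where "F x = (if x \<in> {0..1} then x powr p else 0) + (if x \<in> {1..} then x powr q else 0)" for x :: real
  define I1 where "I1 = 1 / (p+1) + (- (1 powr (q+1)) / (q+1))"
  have F0: "F x \<ge> 0" for x unfolding F_def by auto
  have hF: "(F has_integral I1) UNIV"
  proof -
    have a: "((\<lambda>x. if x \<in> {0..1} then x powr p else 0) has_integral (1 / (p+1))) UNIV"
      using has_integral_powr_from_0[OF p1, of 1] by (subst has_integral_restrict_UNIV) simp
    have b: "((\<lambda>x. if x \<in> {1..} then x powr q else 0) has_integral (- (1 powr (q+1)) / (q+1))) UNIV"
      using has_integral_powr_to_inf[OF q1, of 1] by (subst has_integral_restrict_UNIV) simp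
    show ?thesis unfolding F_def I1_def using has_integral_add[OF a b] by simp
  qed
  define C where "C = max 1 (max (c * I1) (c * (- (1 powr (r+1)) / (r+1))))"
  show ?thesis
  proof (intro exI[of _ C] conjI allI impI)
    show "C > 0" unfolding C_def by simp
  next
    fix i :: nat assume i1: "1 \<le> i"
    have ptw: "\<bar>g x * g (x + real i)\<bar> powr (\<beta> / 2) \<le> c * real i powr q * F x" for x
    proof (cases "x < 0")
      case True
      have "\<bar>g x\<bar> \<le> 0" using gb[of x] True by (simp add: indicator_def)
      hence "g x = 0" by simp
      thus ?thesis using c0 F0[of x] by simp
    next
      case False
      have b2: "\<bar>g (x + real i)\<bar> \<le> K * real i powr (-\<alpha>)"
      proof -
        have "\<bar>g (x + real i)\<bar> \<le> K * (x + real i) powr (-\<alpha>)"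
          using gb[of "x + real i"] False i1 by (simp add: indicator_def)
        also have "\<dots> \<le> K * real i powr (-\<alpha>)"
          using False i1 assms(4,6) by (intro mult_left_mono powr_mono2') auto
        finally show ?thesis .
      qed
      define b where "b = x powr \<kappa> * indicator {0..<1} x + x powr (-\<alpha>) * indicator {1..} x"
      have b0: "b \<ge> 0" unfolding b_def by (auto simp: indicator_def)
      have bF: "b powr (\<beta>/2) \<le> F x"
        using False unfolding b_def F_def p_def q_def
        by (auto simp: indicator_def powr_powr)
      have "\<bar>g x * g (x + real i)\<bar> powr (\<beta> / 2) = \<bar>g x\<bar> powr (\<beta> / 2) * \<bar>g (x + real i)\<bar> powr (\<beta> / 2)"
        by (simp add: abs_mult powr_mult)
      also have "\<dots> \<le> (K * b) powr (\<beta> / 2) * (K * real i powr (-\<alpha>)) powr (\<beta> / 2)"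
        using assms(1) gb[of x] b2 unfolding b_def
        by (intro mult_mono powr_mono2) auto
      also have "\<dots> = (K powr (\<beta>/2) * K powr (\<beta>/2)) * real i powr q * b powr (\<beta> / 2)"
        using assms(4) b0 unfolding q_def by (simp add: powr_mult powr_powr)
      also have "\<dots> = c * real i powr q * b powr (\<beta> / 2)"
        unfolding c_def by (simp add: powr_add[symmetric])
      also have "\<dots> \<le> c * real i powr q * F x"
        using c0 bF by (intro mult_left_mono) auto
      finally show ?thesis .
    qed
    have "(\<integral>\<^sup>+ x. ennreal (\<bar>g x * g (x + real i)\<bar> powr (\<beta> / 2)) \<partial>lborel)
        \<le> (\<integral>\<^sup>+ x. ennreal (c * real i powr q * F x) \<partial>lborel)"
      by (intro nn_integral_mono ennreal_leI ptw)
    also have "\<dots> = ennreal (c * real i powr q * I1)"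
      using nn_integral_has_integral_lebesgue'[of UNIV "\<lambda>x. c * real i powr q * F x", OF _ has_integral_mult_right[OF hF]]
        c0 F0 by simp
    also have "\<dots> \<le> ennreal (C * real i powr (- \<alpha> * \<beta> / 2))"
    proof (intro ennreal_leI)
      have "c * I1 \<le> C" unfolding C_def by simp
      hence "c * I1 * real i powr q \<le> C * real i powr q" by (intro mult_right_mono) auto
      thus "c * real i powr q * I1 \<le> C * real i powr (- \<alpha> * \<beta> / 2)" unfolding q_def by (simp add: algebra_simps)
    qed
    finally show "(\<integral>\<^sup>+ x. ennreal (\<bar>g x * g (x + real i)\<bar> powr (\<beta> / 2)) \<partial>lborel)
          \<le> ennreal (C * real i powr (- \<alpha> * \<beta> / 2))" .
  next
    fix i :: nat assume im: "m < i"
    define a where "a = real i - real m"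
    have a1: "a \<ge> 1" using im unfolding a_def by simp
    have ptw: "\<bar>g (x + real i)\<bar> powr \<beta> \<le> c * (real i + x) powr r" if "x \<ge> - real m" for x
    proof -
      have "\<bar>g (x + real i)\<bar> \<le> K * (x + real i) powr (-\<alpha>)"
        using gb[of "x + real i"] that im by (simp add: indicator_def)
      hence "\<bar>g (x + real i)\<bar> powr \<beta> \<le> (K * (x + real i) powr (-\<alpha>)) powr \<beta>"
        using assms(1) by (intro powr_mono2) auto
      also have "\<dots> = c * (real i + x) powr r"
        using assms(4) that im unfolding c_def r_def by (simp add: powr_mult powr_powr add.commute)
      finally show ?thesis .
    qed
    have "(\<integral>\<^sup>+ x \<in> {- real m..}. ennreal (\<bar>g (x + real i)\<bar> powr \<beta>) \<partial>lborel)
        \<le> (\<integral>\<^sup>+ x. ennreal c * (ennreal ((real i + x) powr r) * indicator {a - real i..} x) \<partial>lborel)"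
      apply (intro nn_integral_mono)
      subgoal for x using ptw[of x] c0 unfolding a_def
        by (auto simp: indicator_def ennreal_mult[symmetric] intro!: ennreal_leI)
      done
    also have "\<dots> = ennreal c * ennreal (-(a powr (r+1)) / (r+1))"
      using shift_int[OF r1, of a "real i"] a1 by (subst nn_integral_cmult) auto
    also have "\<dots> \<le> ennreal (C * (real i - real m) powr (1 - \<alpha> * \<beta>))"
    proof -
      have e: "-(a powr (r+1)) / (r+1) = (- 1 / (r+1)) * a powr (1 - \<alpha> * \<beta>)"
        unfolding r_def by simp
      have "c * (- 1 / (r+1)) \<le> C" unfolding C_def by simp
      hence "c * (- 1 / (r+1)) * a powr (1 - \<alpha> * \<beta>) \<le> C * a powr (1 - \<alpha> * \<beta>)"
        by (intro mult_right_mono) auto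
      hence "c * (-(a powr (r+1)) / (r+1)) \<le> C * a powr (1 - \<alpha> * \<beta>)" unfolding e by (simp add: mult.assoc)
      hence "ennreal (c * (-(a powr (r+1)) / (r+1))) \<le> ennreal (C * (real i - real m) powr (1 - \<alpha> * \<beta>))"
        unfolding a_def by (rule ennreal_leI)
      moreover have "ennreal c * ennreal (-(a powr (r+1)) / (r+1)) = ennreal (c * (-(a powr (r+1)) / (r+1)))"
      proof (rule ennreal_mult[symmetric])
        show "0 \<le> c" using c0 by simp
        show "0 \<le> -(a powr (r+1)) / (r+1)" using r1 by (intro divide_nonpos_neg) auto
      qed
      ultimately show ?thesis by simp
    qed
    finally show "(\<integral>\<^sup>+ x \<in> {- real m..}. ennreal (\<bar>g (x + real i)\<bar> powr \<beta>) \<partial>lborel)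
          \<le> ennreal (C * (real i - real m) powr (1 - \<alpha> * \<beta>))" .
  qed
qed

end
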